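(* Let $S$ be a topological Clifford semigroup in which every maximal subgroup $G_e$ is open. Then $E(S)$ is a $G_\delta$-subset of $S$ if and only if, for every $e\in E(S)$, the singleton $\{e\}$ is a $G_\delta$-subset of $G_e$.
   Context: A Clifford semigroup is an inverse semigroup (each $x$ has a unique $x^{-1}$ with $xx^{-1}x=x$, $x^{-1}xx^{-1}=x^{-1}$) with $xx^{-1}=x^{-1}x$ for all $x$; topological means multiplication and inversion are continuous. $E(S)$ is the set of idempotents; $G_e:=\{x: xx^{-1}=e\}$ with the subspace topology. A $G_\delta$-subset is a countable intersection of open sets. *)

theory Defs
  imports "HOL-Analysis.Analysis"
begin

definition inverse_semigroup :: "('a::semigroup_mult) itself \<Rightarrow> bool" where
  "inverse_semigroup _ \<longleftrightarrow> (\<forall>x::'a. \<exists>!y. x * y * x = x \<and> y * x * y = y)"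

definition sinv :: "'a::semigroup_mult \<Rightarrow> 'a" where
  "sinv x = (THE y. x * y * x = x \<and> y * x * y = y)"

definition clifford_semigroup :: "('a::semigroup_mult) itself \<Rightarrow> bool" where
  "clifford_semigroup T \<longleftrightarrow> inverse_semigroup T \<and> (\<forall>x::'a. x * sinv x = sinv x * x)"

definition topological_clifford_semigroup ::
    "('a::{semigroup_mult, topological_space}) itself \<Rightarrow> bool" where
  "topological_clifford_semigroup T \<longleftrightarrow> clifford_semigroup T
     \<and> continuous_on (UNIV :: ('a \<times> 'a) set) (\<lambda>p. fst p * snd p)
     \<and> continuous_on (UNIV :: 'a set) sinv"

definition idempotents :: "'a::semigroup_mult set" where
  "idempotents = {e. e * e = e}"

definition maxsubgroup :: "'a::semigroup_mult \<Rightarrow> 'a set" where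
  "maxsubgroup e = {x. x * sinv x = e}"

end

theory Submission
  imports Defs
begin

lemma sinv_props:
  fixes x :: "'a::semigroup_mult"
  assumes "inverse_semigroup (TYPE('a))"
  shows "x * sinv x * x = x \<and> sinv x * x * sinv x = sinv x"
proof -
  have "\<exists>!y. x * y * x = x \<and> y * x * y = y" using assms unfolding inverse_semigroup_def by blast
  then show ?thesis unfolding sinv_def by (rule theI')
qed

lemma sinv_idem:
  fixes f :: "'a::semigroup_mult"
  assumes "inverse_semigroup (TYPE('a))" "f * f = f"
  shows "sinv f = f"
proof -
  have "\<exists>!y. f * y * f = f \<and> y * f * y = y" using assms unfolding inverse_semigroup_def by blast
  moreover have "f * f * f = f \<and> f * f * f = f" using assms(2) by simp
  ultimately show ?thesis unfolding sinv_def by (rule the1_equality)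
qed

lemma idem_in_max:
  fixes e :: "'a::semigroup_mult"
  assumes "inverse_semigroup (TYPE('a))" "e \<in> idempotents"
  shows "e \<in> maxsubgroup e"
  using assms sinv_idem[OF assms(1)] by (simp add: idempotents_def maxsubgroup_def)

lemma idem_in_max_eq:
  fixes e f :: "'a::semigroup_mult"
  assumes "inverse_semigroup (TYPE('a))" "f \<in> idempotents" "f \<in> maxsubgroup e"
  shows "f = e"
  using assms sinv_idem[OF assms(1)] by (simp add: idempotents_def maxsubgroup_def)

lemma gdelta_range:
  assumes "gdelta_in euclidean S"
  obtains V :: "nat \<Rightarrow> 'a::topological_space set" where "\<And>n. open (V n)" "S = \<Inter>(range V)"
proof -
  have "(countable intersection_of openin euclidean) S"
    using assms by (simp add: gdelta_in_alt)
  then obtain U where U: "countable U" "U \<subseteq> Collect (openin euclidean)" "\<Inter>U = S"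
    unfolding intersection_of_def by blast
  define U' where "U' = insert UNIV U"
  have "U' \<noteq> {}" "countable U'" using U(1) by (auto simp: U'_def)
  then have r: "range (from_nat_into U') = U'" by (rule range_from_nat_into)
  have oU: "open A" if "A \<in> U'" for A
    using that U(2) unfolding U'_def by auto
  have iU: "\<Inter>U' = S" using U(3) unfolding U'_def by simp
  show ?thesis
  proof
    fix n show "open (from_nat_into U' n)" using oU r by (metis rangeI)
  next
    show "S = \<Inter>(range (from_nat_into U'))" using r iU by simp
  qed
qed

theorem lemma4p4:
  fixes T :: "('a::{semigroup_mult, topological_space}) itself"
  assumes "topological_clifford_semigroup T"
    and "\<forall>e::'a \<in> idempotents. open (maxsubgroup e)"
  shows "gdelta_in euclidean (idempotents :: 'a set) \<longleftrightarrow>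
         (\<forall>e::'a \<in> idempotents. gdelta_in (subtopology euclidean (maxsubgroup e)) {e})"
proof -
  have inv: "inverse_semigroup (TYPE('a))"
    using assms(1) unfolding topological_clifford_semigroup_def clifford_semigroup_def
      inverse_semigroup_def by simp
  have sub: "gdelta_in (subtopology euclidean (maxsubgroup e)) {e} \<longleftrightarrow> gdelta_in euclidean {e}"
    if "e \<in> idempotents" for e :: 'a
  proof -
    have G: "gdelta_in euclidean (maxsubgroup e)"
      using assms(2) that by (simp add: open_imp_gdelta_in)
    show ?thesis
      using gdelta_in_gdelta_subtopology[OF G, of "{e}"] idem_in_max[OF inv that] by simp
  qed
  have "gdelta_in euclidean (idempotents :: 'a set) \<longleftrightarrow>
         (\<forall>e::'a \<in> idempotents. gdelta_in euclidean {e})"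
  proof
    assume E: "gdelta_in euclidean (idempotents :: 'a set)"
    show "\<forall>e::'a \<in> idempotents. gdelta_in euclidean {e}"
    proof
      fix e :: 'a assume e: "e \<in> idempotents"
      have "{e} = idempotents \<inter> maxsubgroup e"
        using idem_in_max[OF inv e] idem_in_max_eq[OF inv] e by blast
      moreover have "gdelta_in euclidean (idempotents \<inter> maxsubgroup e)"
        using E assms(2) e by (intro gdelta_in_Int[OF E] open_imp_gdelta_in) auto
      ultimately show "gdelta_in euclidean {e}" by simp
    qed
  next
    assume H: "\<forall>e::'a \<in> idempotents. gdelta_in euclidean {e}"
    have "\<forall>e\<in>(idempotents::'a set). \<exists>V :: nat \<Rightarrow> 'a set. (\<forall>n. open (V n)) \<and> {e} = \<Inter>(range V)"
    proof
      fix e :: 'a assume "e \<in> idempotents"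
      then have "gdelta_in euclidean {e}" using H by blast
      then obtain V :: "nat \<Rightarrow> 'a set" where "\<And>n. open (V n)" "{e} = \<Inter>(range V)"
        using gdelta_range by blast
      then show "\<exists>V :: nat \<Rightarrow> 'a set. (\<forall>n. open (V n)) \<and> {e} = \<Inter>(range V)" by blast
    qed
    note ex = this
    define V where "V e = (SOME W :: nat \<Rightarrow> 'a set. (\<forall>n. open (W n)) \<and> {e} = \<Inter>(range W))" for e :: 'a
    have V0: "(\<forall>n. open (V e n)) \<and> {e} = \<Inter>(range (V e))" if "e \<in> idempotents" for e
    proof -
      have "\<exists>W :: nat \<Rightarrow> 'a set. (\<forall>n. open (W n)) \<and> {e} = \<Inter>(range W)"
        using ex that by (rule bspec)
      then show ?thesis unfolding V_def by (rule someI_ex)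
    qed
    have V: "\<And>e n. e \<in> (idempotents::'a set) \<Longrightarrow> open (V e n)"
      "\<And>e. e \<in> (idempotents::'a set) \<Longrightarrow> {e} = \<Inter>(range (V e))"
      using V0 by simp_all
    define U where "U n = (\<Union>e\<in>idempotents. V e n \<inter> maxsubgroup e)" for n
    have oU: "open (U n)" for n
      unfolding U_def using V(1) assms(2) by (intro open_UN ballI open_Int) auto
    have "idempotents = \<Inter>(range U)"
    proof
      show "idempotents \<subseteq> \<Inter>(range U)"
      proof
        fix x :: 'a assume x: "x \<in> idempotents"
        have "x \<in> V x n" for n using V(2)[OF x] by blast
        then show "x \<in> \<Inter>(range U)"
          unfolding U_def using x idem_in_max[OF inv x] by blast
      qed
    next
      show "\<Inter>(range U) \<subseteq> idempotents"
      proof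
        fix x :: 'a assume x: "x \<in> \<Inter>(range U)"
        define e where "e = x * sinv x"
        have eE: "e \<in> idempotents"
        proof -
          have "x * sinv x * (x * sinv x) = (x * sinv x * x) * sinv x" by (simp add: mult.assoc)
          then show ?thesis using sinv_props[OF inv, of x] unfolding e_def idempotents_def by simp
        qed
        have "x \<in> V e n" for n
        proof -
          from x have "x \<in> U n" by blast
          then obtain f where "f \<in> idempotents" "x \<in> V f n" "x \<in> maxsubgroup f"
            unfolding U_def by blast
          moreover then have "f = e" unfolding maxsubgroup_def e_def by simp
          ultimately show ?thesis by simp
        qed
        then have "x \<in> \<Inter>(range (V e))" by blast
        then have "x = e" using V(2)[OF eE] by blast
        then show "x \<in> idempotents" using eE by simp
      qed
    qed
    moreover have "gdelta_in euclidean (\<Inter>(range U))"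
    proof (rule gdelta_in_Inter)
      show "countable (range U)" by simp
      show "range U \<noteq> {}" by simp
      fix A assume "A \<in> range U"
      then obtain n where "A = U n" by blast
      then show "gdelta_in euclidean A" using oU[of n] by (simp add: open_imp_gdelta_in)
    qed
    ultimately show "gdelta_in euclidean (idempotents :: 'a set)" by simp
  qed
  then show ?thesis using sub by auto
qed

end
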